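(* For every $d\ge 4$, every $\beta\in(0,\infty)$ and every choice of pairwise distinct energies $E_0=0,E_1,\dots,E_{d-1}$, the convex set $TP(d)$ has an extreme point that is not biplanar.
   Context: Put $q_{m,n}=e^{-\beta(E_m-E_n)}$, $Z=\sum_j q_{j,0}$, $g_i=q_{i,0}/Z$. $TP(d)$ is the set of $d\times d$ real matrices $T$ with non-negative entries, each column summing to $1$, and $Tg=g$. For $T\in TP(d)$, $G(T)$ is the bipartite graph with left vertices $L_0,\dots,L_{d-1}$ (columns), right vertices $R_0,\dots,R_{d-1}$ (rows), and an edge $\{L_j,R_i\}$ iff $T_{ij}>0$. Given orderings $\lambda,\mu$ (permutations of $\{0,\dots,d-1\}$), place $L_{\lambda_a}$ at height $a$ on one vertical line and $R_{\mu_b}$ at height $b$ on a parallel line, edges drawn straight; the drawing is plain if there are no two edges $\{L_{\lambda_a},R_{\mu_b}\}$, $\{L_{\lambda_{a'}},R_{\mu_{b'}}\}$ with $a<a'$ and $b>b'$. An extreme point $T$ of $TP(d)$ is biplanar if some pair $(\lambda,\mu)$ gives a plain drawing of $G(T)$. *)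

theory Defs
  imports "HOL-Analysis.Analysis"
begin

text \<open>Matrices of size d are represented as functions nat => nat => real, T i j being the
entry in row i and column j, with all entries outside {..<d} x {..<d} equal to zero.\<close>

definition qf :: "(nat \<Rightarrow> real) \<Rightarrow> real \<Rightarrow> nat \<Rightarrow> nat \<Rightarrow> real" where
  "qf E \<beta> m n = exp (- \<beta> * (E m - E n))"

definition Zf :: "(nat \<Rightarrow> real) \<Rightarrow> real \<Rightarrow> nat \<Rightarrow> real" where
  "Zf E \<beta> d = (\<Sum>j<d. qf E \<beta> j 0)"

definition gf :: "(nat \<Rightarrow> real) \<Rightarrow> real \<Rightarrow> nat \<Rightarrow> nat \<Rightarrow> real" where
  "gf E \<beta> d i = qf E \<beta> i 0 / Zf E \<beta> d"

definition TP :: "(nat \<Rightarrow> real) \<Rightarrow> real \<Rightarrow> nat \<Rightarrow> (nat \<Rightarrow> nat \<Rightarrow> real) set" where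
  "TP E \<beta> d = {T. (\<forall>i j. (d \<le> i \<or> d \<le> j) \<longrightarrow> T i j = 0)
      \<and> (\<forall>i<d. \<forall>j<d. 0 \<le> T i j)
      \<and> (\<forall>j<d. (\<Sum>i<d. T i j) = 1)
      \<and> (\<forall>i<d. (\<Sum>j<d. T i j * gf E \<beta> d j) = gf E \<beta> d i)}"

text \<open>Extreme point of a set of matrices (the unfolded form of the library notion
extreme_point_of: not in the open segment between two distinct members).\<close>
definition extreme_mat :: "(nat \<Rightarrow> nat \<Rightarrow> real) \<Rightarrow> (nat \<Rightarrow> nat \<Rightarrow> real) set \<Rightarrow> bool" where
  "extreme_mat T S \<longleftrightarrow> T \<in> S \<and>
     \<not> (\<exists>A\<in>S. \<exists>B\<in>S. A \<noteq> B \<and>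
          (\<exists>t::real. 0 < t \<and> t < 1 \<and> T = (\<lambda>i j. (1 - t) * A i j + t * B i j)))"

text \<open>Plain drawing of G(T) for orderings lam (left/columns) and mu (right/rows):
L_(lam a) at height a, R_(mu b) at height b; edge {L_j, R_i} iff T i j > 0.\<close>
definition plain_drawing :: "nat \<Rightarrow> (nat \<Rightarrow> nat \<Rightarrow> real) \<Rightarrow> (nat \<Rightarrow> nat) \<Rightarrow> (nat \<Rightarrow> nat) \<Rightarrow> bool" where
  "plain_drawing d T lam mu \<longleftrightarrow>
     \<not> (\<exists>a a' b b'. a < d \<and> a' < d \<and> b < d \<and> b' < d \<and> a < a' \<and> b' < b \<and>
          0 < T (mu b) (lam a) \<and> 0 < T (mu b') (lam a'))"

definition biplanar :: "nat \<Rightarrow> (nat \<Rightarrow> nat \<Rightarrow> real) \<Rightarrow> bool" where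
  "biplanar d T \<longleftrightarrow> (\<exists>lam mu. bij_betw lam {..<d} {..<d} \<and> bij_betw mu {..<d} {..<d}
                          \<and> plain_drawing d T lam mu)"

end

theory Submission
  imports Defs
begin

definition Tm :: "nat \<Rightarrow> (nat \<Rightarrow> real) \<Rightarrow> nat \<Rightarrow> nat \<Rightarrow> nat \<Rightarrow> nat \<Rightarrow> nat \<Rightarrow> nat \<Rightarrow> real" where
"Tm d g p1 p2 p3 p4 i j = (if d \<le> i \<or> d \<le> j then 0 else
 if i=p1 \<and> j=p1 then (g p1 - g p2 + g p4)/g p1
 else if i=p1 \<and> j=p2 then (g p2 - g p4)/g p2
 else if i=p2 \<and> j=p1 then (g p2 - g p3)/g p1
 else if i=p2 \<and> j=p3 then 1
 else if i=p3 \<and> j=p1 then (g p3 - g p4)/g p1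
 else if i=p3 \<and> j=p4 then 1
 else if i=p4 \<and> j=p2 then g p4/g p2
 else if i=j \<and> i\<notin>{p1,p2,p3,p4} then 1 else 0)"

definition suppm :: "nat \<Rightarrow> nat \<Rightarrow> nat \<Rightarrow> nat \<Rightarrow> nat \<Rightarrow> nat \<Rightarrow> nat \<Rightarrow> bool" where
"suppm d p1 p2 p3 p4 i j = (i<d \<and> j<d \<and> ((i=p1\<and>j=p1) \<or> (i=p1\<and>j=p2) \<or> (i=p2\<and>j=p1) \<or> (i=p2\<and>j=p3)
   \<or> (i=p3\<and>j=p1) \<or> (i=p3\<and>j=p4) \<or> (i=p4\<and>j=p2) \<or> (i=j \<and> i\<notin>{p1,p2,p3,p4})))"

context
  fixes d :: nat and g :: "nat \<Rightarrow> real" and p1 p2 p3 p4 :: nat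
  assumes lt: "p1 < d" "p2 < d" "p3 < d" "p4 < d"
    and dist: "p1 \<noteq> p2" "p1 \<noteq> p3" "p1 \<noteq> p4" "p2 \<noteq> p3" "p2 \<noteq> p4" "p3 \<noteq> p4"
    and ord: "g p1 > g p2" "g p2 > g p3" "g p3 > g p4" "g p4 > 0"
begin

lemma colsum:
  fixes X :: "nat \<Rightarrow> nat \<Rightarrow> real"
  assumes Z: "\<And>i j. \<not> suppm d p1 p2 p3 p4 i j \<Longrightarrow> X i j = 0" and j: "j < d"
  shows "(\<Sum>i<d. X i j) = (if j=p1 then X p1 p1 + X p2 p1 + X p3 p1 else if j=p2 then X p1 p2 + X p4 p2
     else if j=p3 then X p2 p3 else if j=p4 then X p3 p4 else X j j)"
proof -
  have base: "(\<Sum>i<d. X i j) = (\<Sum>i\<in>{i. i<d \<and> suppm d p1 p2 p3 p4 i j}. X i j)"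
    using Z by (intro sum.mono_neutral_right) auto
  consider "j=p1" | "j=p2" | "j=p3" | "j=p4" | "j\<noteq>p1" "j\<noteq>p2" "j\<noteq>p3" "j\<noteq>p4" by blast
  then show ?thesis
  proof cases
    case 1
    have s: "{i. i<d \<and> suppm d p1 p2 p3 p4 i j} = {p1,p2,p3}" using 1 lt dist by (auto simp: suppm_def)
    show ?thesis unfolding base s using 1 dist by (simp add: algebra_simps)
  next
    case 2
    have s: "{i. i<d \<and> suppm d p1 p2 p3 p4 i j} = {p1,p4}" using 2 lt dist by (auto simp: suppm_def)
    show ?thesis unfolding base s using 2 dist by (simp add: algebra_simps)
  next
    case 3
    have s: "{i. i<d \<and> suppm d p1 p2 p3 p4 i j} = {p2}" using 3 lt dist by (auto simp: suppm_def)
    show ?thesis unfolding base s using 3 dist by (simp add: algebra_simps)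
  next
    case 4
    have s: "{i. i<d \<and> suppm d p1 p2 p3 p4 i j} = {p3}" using 4 lt dist by (auto simp: suppm_def)
    show ?thesis unfolding base s using 4 dist by (simp add: algebra_simps)
  next
    case 5
    have s: "{i. i<d \<and> suppm d p1 p2 p3 p4 i j} = {j}" using 5 j by (auto simp: suppm_def)
    show ?thesis unfolding base s using 5 dist by (simp add: algebra_simps)
  qed
qed

lemma rowsum:
  fixes X :: "nat \<Rightarrow> nat \<Rightarrow> real"
  assumes Z: "\<And>i j. \<not> suppm d p1 p2 p3 p4 i j \<Longrightarrow> X i j = 0" and i: "i < d"
  shows "(\<Sum>j<d. X i j * g j) = (if i=p1 then X p1 p1 * g p1 + X p1 p2 * g p2
     else if i=p2 then X p2 p1 * g p1 + X p2 p3 * g p3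
     else if i=p3 then X p3 p1 * g p1 + X p3 p4 * g p4
     else if i=p4 then X p4 p2 * g p2 else X i i * g i)"
proof -
  have base: "(\<Sum>j<d. X i j * g j) = (\<Sum>j\<in>{j. j<d \<and> suppm d p1 p2 p3 p4 i j}. X i j * g j)"
    using Z by (intro sum.mono_neutral_right) auto
  consider "i=p1" | "i=p2" | "i=p3" | "i=p4" | "i\<noteq>p1" "i\<noteq>p2" "i\<noteq>p3" "i\<noteq>p4" by blast
  then show ?thesis
  proof cases
    case 1
    have s: "{j. j<d \<and> suppm d p1 p2 p3 p4 i j} = {p1,p2}" using 1 lt dist by (auto simp: suppm_def)
    show ?thesis unfolding base s using 1 dist by (simp add: algebra_simps)
  next
    case 2
    have s: "{j. j<d \<and> suppm d p1 p2 p3 p4 i j} = {p1,p3}" using 2 lt dist by (auto simp: suppm_def)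
    show ?thesis unfolding base s using 2 dist by (simp add: algebra_simps)
  next
    case 3
    have s: "{j. j<d \<and> suppm d p1 p2 p3 p4 i j} = {p1,p4}" using 3 lt dist by (auto simp: suppm_def)
    show ?thesis unfolding base s using 3 dist by (simp add: algebra_simps)
  next
    case 4
    have s: "{j. j<d \<and> suppm d p1 p2 p3 p4 i j} = {p2}" using 4 lt dist by (auto simp: suppm_def)
    show ?thesis unfolding base s using 4 dist by (simp add: algebra_simps)
  next
    case 5
    have s: "{j. j<d \<and> suppm d p1 p2 p3 p4 i j} = {i}" using 5 i by (auto simp: suppm_def)
    show ?thesis unfolding base s using 5 dist by (simp add: algebra_simps)
  qed
qed

lemma Tm_supp: "\<not> suppm d p1 p2 p3 p4 i j \<Longrightarrow> Tm d g p1 p2 p3 p4 i j = 0"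
proof -
  assume ns: "\<not> suppm d p1 p2 p3 p4 i j"
  show ?thesis
  proof (cases "i < d \<and> j < d")
    case False then have "d \<le> i \<or> d \<le> j" by auto
    then show ?thesis unfolding Tm_def by (simp only: if_P)
  next
    case True
    then have h: "\<not> (d \<le> i \<or> d \<le> j)" "\<not> (i=p1 \<and> j=p1)" "\<not> (i=p1 \<and> j=p2)" "\<not> (i=p2 \<and> j=p1)"
      "\<not> (i=p2 \<and> j=p3)" "\<not> (i=p3 \<and> j=p1)" "\<not> (i=p3 \<and> j=p4)" "\<not> (i=p4 \<and> j=p2)"
      "\<not> (i=j \<and> i\<notin>{p1,p2,p3,p4})"
      using ns unfolding suppm_def by (simp_all only: not_le de_Morgan_disj simp_thms)
    show ?thesis unfolding Tm_def by (simp only: if_not_P[OF h(1)] if_not_P[OF h(2)] if_not_P[OF h(3)]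
      if_not_P[OF h(4)] if_not_P[OF h(5)] if_not_P[OF h(6)] if_not_P[OF h(7)] if_not_P[OF h(8)] if_not_P[OF h(9)])
  qed
qed

lemma Tm_vals:
  "Tm d g p1 p2 p3 p4 p1 p1 = (g p1 - g p2 + g p4)/g p1"
  "Tm d g p1 p2 p3 p4 p1 p2 = (g p2 - g p4)/g p2"
  "Tm d g p1 p2 p3 p4 p2 p1 = (g p2 - g p3)/g p1"
  "Tm d g p1 p2 p3 p4 p2 p3 = 1"
  "Tm d g p1 p2 p3 p4 p3 p1 = (g p3 - g p4)/g p1"
  "Tm d g p1 p2 p3 p4 p3 p4 = 1"
  "Tm d g p1 p2 p3 p4 p4 p2 = g p4/g p2"
  using lt dist dist[symmetric] by (simp_all add: Tm_def not_le del: if_split)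

lemma Tm_diag: "i < d \<Longrightarrow> i \<notin> {p1,p2,p3,p4} \<Longrightarrow> Tm d g p1 p2 p3 p4 i i = 1"
  by (simp add: Tm_def)

lemma pos: "g p1 > 0" "g p2 > 0" "g p3 > 0" using ord by linarith+

lemma Tm_nonneg: "0 \<le> Tm d g p1 p2 p3 p4 i j"
proof (cases "suppm d p1 p2 p3 p4 i j")
  case True
  then consider "i=p1" "j=p1" | "i=p1" "j=p2" | "i=p2" "j=p1" | "i=p2" "j=p3" | "i=p3" "j=p1"
    | "i=p3" "j=p4" | "i=p4" "j=p2" | "i=j" "i<d" "i\<notin>{p1,p2,p3,p4}"
    unfolding suppm_def by blast
  then show ?thesis using ord pos
    by cases (simp_all add: Tm_vals Tm_diag)
next
  case False then show ?thesis by (simp add: Tm_supp)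
qed

lemma Tm_in:
  fixes E \<beta>
  assumes gdef: "g = gf E \<beta> d"
  shows "Tm d g p1 p2 p3 p4 \<in> TP E \<beta> d"
proof -
  let ?T = "Tm d g p1 p2 p3 p4"
  have A: "\<forall>i j. (d \<le> i \<or> d \<le> j) \<longrightarrow> ?T i j = 0" by (auto intro!: Tm_supp simp: suppm_def)
  have B: "\<forall>i<d. \<forall>j<d. 0 \<le> ?T i j" using Tm_nonneg by auto
  have C: "\<forall>j<d. (\<Sum>i<d. ?T i j) = 1"
  proof (intro allI impI)
    fix j assume j: "j < d"
    have e: "(\<Sum>i<d. ?T i j) = (if j=p1 then ?T p1 p1 + ?T p2 p1 + ?T p3 p1 else if j=p2 then ?T p1 p2 + ?T p4 p2
     else if j=p3 then ?T p2 p3 else if j=p4 then ?T p3 p4 else ?T j j)"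
      by (rule colsum[OF Tm_supp j])
    show "(\<Sum>i<d. ?T i j) = 1"
      unfolding e using j dist pos
      by (auto simp: Tm_vals Tm_diag field_simps)
  qed
  have D: "\<forall>i<d. (\<Sum>j<d. ?T i j * g j) = g i"
  proof (intro allI impI)
    fix i assume i: "i < d"
    have e: "(\<Sum>j<d. ?T i j * g j) = (if i=p1 then ?T p1 p1 * g p1 + ?T p1 p2 * g p2
     else if i=p2 then ?T p2 p1 * g p1 + ?T p2 p3 * g p3
     else if i=p3 then ?T p3 p1 * g p1 + ?T p3 p4 * g p4
     else if i=p4 then ?T p4 p2 * g p2 else ?T i i * g i)"
      by (rule rowsum[OF Tm_supp i])
    show "(\<Sum>j<d. ?T i j * g j) = g i"
      unfolding e using i dist pos ord
      by (auto simp: Tm_vals Tm_diag field_simps)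
  qed
  show ?thesis unfolding TP_def gdef[symmetric] using A B C D by blast
qed

lemma Tm_uniq:
  fixes E \<beta> A
  assumes gdef: "g = gf E \<beta> d" and AT: "A \<in> TP E \<beta> d"
    and Z: "\<And>i j. Tm d g p1 p2 p3 p4 i j = 0 \<Longrightarrow> A i j = 0"
  shows "A = Tm d g p1 p2 p3 p4"
proof -
  have Zs: "\<And>i j. \<not> suppm d p1 p2 p3 p4 i j \<Longrightarrow> A i j = 0" using Z Tm_supp by blast
  have AT': "(\<forall>i j. (d \<le> i \<or> d \<le> j) \<longrightarrow> A i j = 0)
      \<and> (\<forall>i<d. \<forall>j<d. 0 \<le> A i j)
      \<and> (\<forall>j<d. (\<Sum>i<d. A i j) = 1)
      \<and> (\<forall>i<d. (\<Sum>j<d. A i j * g j) = g i)"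
    using AT unfolding TP_def gdef[symmetric] by (simp only: mem_Collect_eq)
  have cs: "\<And>j. j<d \<Longrightarrow> (\<Sum>i<d. A i j) = 1" and rs: "\<And>i. i<d \<Longrightarrow> (\<Sum>j<d. A i j * g j) = g i"
    using AT' by blast+
  have c: "(if j=p1 then A p1 p1 + A p2 p1 + A p3 p1 else if j=p2 then A p1 p2 + A p4 p2
     else if j=p3 then A p2 p3 else if j=p4 then A p3 p4 else A j j) = 1" if "j<d" for j
    using colsum[where X=A, OF Zs that] cs[OF that] by linarith
  have r: "(if i=p1 then A p1 p1 * g p1 + A p1 p2 * g p2
     else if i=p2 then A p2 p1 * g p1 + A p2 p3 * g p3
     else if i=p3 then A p3 p1 * g p1 + A p3 p4 * g p4
     else if i=p4 then A p4 p2 * g p2 else A i i * g i) = g i" if "i<d" for i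
    using rowsum[where X=A, OF Zs that] rs[OF that] by linarith
  have v4: "A p3 p4 = 1" using c[OF lt(4)] dist dist[symmetric] by simp
  have v3: "A p2 p3 = 1" using c[OF lt(3)] dist dist[symmetric] by simp
  have r4: "A p4 p2 * g p2 = g p4" using r[OF lt(4)] dist dist[symmetric] by simp
  have v42: "A p4 p2 = g p4 / g p2" using r4 pos by (simp add: eq_divide_eq)
  have c2: "A p1 p2 + A p4 p2 = 1" using c[OF lt(2)] dist dist[symmetric] by simp
  have e1: "A p1 p2 = 1 - A p4 p2" using c2 by linarith
  have m12: "A p1 p2 * g p2 = g p2 - g p4" unfolding e1 using r4 by (simp add: left_diff_distrib)
  have v12: "A p1 p2 = (g p2 - g p4)/g p2" using m12 pos by (simp add: eq_divide_eq)
  have r1: "A p1 p1 * g p1 + A p1 p2 * g p2 = g p1" using r[OF lt(1)] by simp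
  have m11: "A p1 p1 * g p1 = g p1 - g p2 + g p4" using r1 m12 by linarith
  have v11: "A p1 p1 = (g p1 - g p2 + g p4)/g p1" using m11 pos by (simp add: eq_divide_eq)
  have r2: "A p2 p1 * g p1 + A p2 p3 * g p3 = g p2" using r[OF lt(2)] dist dist[symmetric] by simp
  have m21: "A p2 p1 * g p1 = g p2 - g p3" using r2 v3 by simp
  have v21: "A p2 p1 = (g p2 - g p3)/g p1" using m21 pos by (simp add: eq_divide_eq)
  have r3: "A p3 p1 * g p1 + A p3 p4 * g p4 = g p3" using r[OF lt(3)] dist dist[symmetric] by simp
  have m31: "A p3 p1 * g p1 = g p3 - g p4" using r3 v4 by simp
  have v31: "A p3 p1 = (g p3 - g p4)/g p1" using m31 pos by (simp add: eq_divide_eq)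
  have vd: "A i i = 1" if "i<d" "i \<notin> {p1,p2,p3,p4}" for i using c[OF that(1)] that(2) by simp
  show ?thesis
  proof (intro ext)
    fix i j
    show "A i j = Tm d g p1 p2 p3 p4 i j"
    proof (cases "suppm d p1 p2 p3 p4 i j")
      case True
      then consider "i=p1" "j=p1" | "i=p1" "j=p2" | "i=p2" "j=p1" | "i=p2" "j=p3" | "i=p3" "j=p1"
        | "i=p3" "j=p4" | "i=p4" "j=p2" | "i=j" "i<d" "i\<notin>{p1,p2,p3,p4}"
        unfolding suppm_def by blast
      then show ?thesis
      proof cases
        case 8 then show ?thesis using vd Tm_diag by simp
      qed (simp_all only: Tm_vals v4 v3 v42 v12 v11 v21 v31)
    next
      case False then show ?thesis using Tm_supp Zs by metis
    qed
  qed
qed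

lemma Tm_extreme:
  fixes E \<beta>
  assumes gdef: "g = gf E \<beta> d"
  shows "extreme_mat (Tm d g p1 p2 p3 p4) (TP E \<beta> d)"
  unfolding extreme_mat_def
proof (intro conjI notI)
  show "Tm d g p1 p2 p3 p4 \<in> TP E \<beta> d" using Tm_in[OF gdef] .
next
  assume "\<exists>A\<in>TP E \<beta> d. \<exists>B\<in>TP E \<beta> d. A \<noteq> B \<and>
          (\<exists>t::real. 0 < t \<and> t < 1 \<and> Tm d g p1 p2 p3 p4 = (\<lambda>i j. (1 - t) * A i j + t * B i j))"
  then obtain A B t where A: "A \<in> TP E \<beta> d" and B: "B \<in> TP E \<beta> d" and ne: "A \<noteq> B"
    and t: "0 < t" "t < 1" and T: "Tm d g p1 p2 p3 p4 = (\<lambda>i j. (1 - t) * A i j + t * B i j)" by blast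
  have Tij: "\<And>i j. Tm d g p1 p2 p3 p4 i j = (1 - t) * A i j + t * B i j" using T by metis
  have key: "\<And>i j. Tm d g p1 p2 p3 p4 i j = 0 \<Longrightarrow> A i j = 0 \<and> B i j = 0"
  proof -
    fix i j assume z: "Tm d g p1 p2 p3 p4 i j = 0"
    show "A i j = 0 \<and> B i j = 0"
    proof (cases "i < d \<and> j < d")
      case True
      then have "0 \<le> A i j" "0 \<le> B i j" using A B unfolding TP_def by auto
      moreover have "(1 - t) * A i j + t * B i j = 0" using z Tij by metis
      moreover have "0 \<le> (1 - t) * A i j" "0 \<le> t * B i j" using calculation t by simp_all
      ultimately have "(1 - t) * A i j = 0" "t * B i j = 0" by linarith+
      then show ?thesis using t by simp
    next
      case False
      then show ?thesis using A B unfolding TP_def by auto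
    qed
  qed
  have "A = Tm d g p1 p2 p3 p4" using Tm_uniq[OF gdef A] key by blast
  moreover have "B = Tm d g p1 p2 p3 p4" using Tm_uniq[OF gdef B] key by blast
  ultimately show False using ne by simp
qed

lemma Tm_not_biplanar: "\<not> biplanar d (Tm d g p1 p2 p3 p4)"
proof
  let ?T = "Tm d g p1 p2 p3 p4"
  assume "biplanar d ?T"
  then obtain lam mu where lam: "bij_betw lam {..<d} {..<d}" and mu: "bij_betw mu {..<d} {..<d}"
    and pl: "plain_drawing d ?T lam mu" unfolding biplanar_def by blast
  have H: "\<And>a a' b b'. a<d \<Longrightarrow> a'<d \<Longrightarrow> b<d \<Longrightarrow> b'<d \<Longrightarrow> 0 < ?T (mu b) (lam a)
     \<Longrightarrow> 0 < ?T (mu b') (lam a') \<Longrightarrow> (a<a' \<longrightarrow> b \<le> b') \<and> (a'<a \<longrightarrow> b' \<le> b)"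
    using pl unfolding plain_drawing_def by (meson not_le)
  have surjl: "\<And>p. p < d \<Longrightarrow> \<exists>a<d. lam a = p" using lam unfolding bij_betw_def by (metis imageE lessThan_iff)
  have surjm: "\<And>p. p < d \<Longrightarrow> \<exists>b<d. mu b = p" using mu unfolding bij_betw_def by (metis imageE lessThan_iff)
  obtain a1 where a1: "a1<d" "lam a1 = p1" using surjl lt by blast
  obtain a2 where a2: "a2<d" "lam a2 = p2" using surjl lt by blast
  obtain a3 where a3: "a3<d" "lam a3 = p3" using surjl lt by blast
  obtain a4 where a4: "a4<d" "lam a4 = p4" using surjl lt by blast
  obtain b1 where b1: "b1<d" "mu b1 = p1" using surjm lt by blast
  obtain b2 where b2: "b2<d" "mu b2 = p2" using surjm lt by blast
  obtain b3 where b3: "b3<d" "mu b3 = p3" using surjm lt by blast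
  have ne: "a2 \<noteq> a1" "a3 \<noteq> a1" "a4 \<noteq> a1" "b1 \<noteq> b2" "b1 \<noteq> b3" "b2 \<noteq> b3"
    using a1 a2 a3 a4 b1 b2 b3 dist by auto
  have e11: "0 < ?T (mu b1) (lam a1)" using a1 b1 ord pos by (simp add: Tm_vals)
  have e21: "0 < ?T (mu b2) (lam a1)" using a1 b2 ord pos by (simp add: Tm_vals)
  have e31: "0 < ?T (mu b3) (lam a1)" using a1 b3 ord pos by (simp add: Tm_vals)
  have f1: "0 < ?T (mu b1) (lam a2)" using a2 b1 ord pos by (simp add: Tm_vals)
  have f2: "0 < ?T (mu b2) (lam a3)" using a3 b2 by (simp add: Tm_vals)
  have f3: "0 < ?T (mu b3) (lam a4)" using a4 b3 by (simp add: Tm_vals)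
  have i12: "(a2<a1 \<longrightarrow> b1 \<le> b2) \<and> (a1<a2 \<longrightarrow> b2 \<le> b1)" using H[OF a2(1) a1(1) b1(1) b2(1) f1 e21] .
  have i13: "(a2<a1 \<longrightarrow> b1 \<le> b3) \<and> (a1<a2 \<longrightarrow> b3 \<le> b1)" using H[OF a2(1) a1(1) b1(1) b3(1) f1 e31] .
  have i21: "(a3<a1 \<longrightarrow> b2 \<le> b1) \<and> (a1<a3 \<longrightarrow> b1 \<le> b2)" using H[OF a3(1) a1(1) b2(1) b1(1) f2 e11] .
  have i23: "(a3<a1 \<longrightarrow> b2 \<le> b3) \<and> (a1<a3 \<longrightarrow> b3 \<le> b2)" using H[OF a3(1) a1(1) b2(1) b3(1) f2 e31] .
  have i31: "(a4<a1 \<longrightarrow> b3 \<le> b1) \<and> (a1<a4 \<longrightarrow> b1 \<le> b3)" using H[OF a4(1) a1(1) b3(1) b1(1) f3 e11] .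
  have i32: "(a4<a1 \<longrightarrow> b3 \<le> b2) \<and> (a1<a4 \<longrightarrow> b2 \<le> b3)" using H[OF a4(1) a1(1) b3(1) b2(1) f3 e21] .
  have o: "a2<a1 \<or> a1<a2" "a3<a1 \<or> a1<a3" "a4<a1 \<or> a1<a4" using ne by auto
  from o(1) o(2) o(3) show False by (elim disjE) (use i12 i13 i21 i23 i31 i32 ne in auto)
qed

end

theorem mainTheorem11:
  fixes d :: nat and \<beta> :: real and E :: "nat \<Rightarrow> real"
  assumes "4 \<le> d" and "0 < \<beta>" and "E 0 = 0" and "inj_on E {..<d}"
  shows "\<exists>T. extreme_mat T (TP E \<beta> d) \<and> \<not> biplanar d T"
proof -
  define g where "g = gf E \<beta> d"
  have qpos: "\<And>i. qf E \<beta> i 0 > 0" by (simp add: qf_def)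
  have Zpos: "Zf E \<beta> d > 0" unfolding Zf_def using assms(1) qpos by (intro sum_pos) (auto simp: lessThan_empty_iff)
  have gpos: "\<And>i. g i > 0" unfolding g_def gf_def using qpos Zpos by simp
  have ginj: "i = j" if "i<d" "j<d" "g i = g j" for i j
  proof -
    have "qf E \<beta> i 0 = qf E \<beta> j 0" using that(3) Zpos unfolding g_def gf_def by simp
    then have "\<beta> * (E i - E 0) = \<beta> * (E j - E 0)" unfolding qf_def by simp
    then have "E i = E j" using assms(2) by simp
    then show "i = j" using assms(4) that(1,2) by (meson inj_onD lessThan_iff)
  qed
  define xs where "xs = sort_key (\<lambda>i. - g i) [0,1,2,3::nat]"
  have len: "length xs = 4" by (simp only: xs_def length_sort) simp
  have setxs: "set xs = {0,1,2,3}" by (simp only: xs_def set_sort) simp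
  have dxs: "distinct xs" by (simp only: xs_def distinct_sort) simp
  have sxs: "sorted (map (\<lambda>i. - g i) xs)" unfolding xs_def by (rule sorted_sort_key)
  have memd: "xs!k < d" if "k<4" for k
  proof -
    have "xs!k \<in> set xs" using that len by simp
    then have "xs!k \<le> 3" using setxs by auto
    then show ?thesis using assms(1) by linarith
  qed
  have mono: "g (xs!l) \<le> g (xs!k)" if "k \<le> l" "l < 4" for k l
  proof -
    have "(map (\<lambda>i. - g i) xs)!k \<le> (map (\<lambda>i. - g i) xs)!l"
      using sxs that len by (simp add: sorted_iff_nth_mono)
    then show ?thesis using that len by simp
  qed
  have dst: "xs!k \<noteq> xs!l" if "k \<noteq> l" "k<4" "l<4" for k l
    using dxs that len by (simp add: nth_eq_iff_index_eq)
  have strict: "g (xs!l) < g (xs!k)" if "k < l" "l < 4" for k l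
  proof -
    have "g (xs!l) \<noteq> g (xs!k)"
      using ginj[OF memd memd] dst that by (metis less_trans nat_neq_iff)
    then show ?thesis using mono[of k l] that by simp
  qed
  have lt: "xs!0 < d" "xs!1 < d" "xs!2 < d" "xs!3 < d" using memd by simp_all
  have ds: "xs!0 \<noteq> xs!1" "xs!0 \<noteq> xs!2" "xs!0 \<noteq> xs!3" "xs!1 \<noteq> xs!2" "xs!1 \<noteq> xs!3" "xs!2 \<noteq> xs!3"
    using dst by simp_all
  have od: "g (xs!0) > g (xs!1)" "g (xs!1) > g (xs!2)" "g (xs!2) > g (xs!3)" "g (xs!3) > 0"
    using strict gpos by simp_all
  let ?T = "Tm d g (xs!0) (xs!1) (xs!2) (xs!3)"
  have "extreme_mat ?T (TP E \<beta> d)"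
    by (rule Tm_extreme[OF lt ds od g_def])
  moreover have "\<not> biplanar d ?T"
    by (rule Tm_not_biplanar[OF lt ds od])
  ultimately show ?thesis by blast
qed

end
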